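(* Let $G$ be a $2$-connected bipartite graph of order $n\ge 9$. Then ${\rm cc}(G)\ge 8$. Moreover, ${\rm cc}(G)=8$ if and only if $G\in\mathscr{F}_n$.
   Context: All graphs are finite and simple. A cummerbund of a graph is a longest cycle; ${\rm cc}(G)$ is the number of vertices of $G$ lying in at least one cummerbund. The family $\mathscr{F}_n=\{G_{1,n},\dots,G_{7,n}\}$ is defined as follows: start with an $8$-cycle $v_1v_2\cdots v_8v_1$, add a chord set $E_i$, and add $n-8$ new pairwise nonadjacent vertices each adjacent exactly to $v_1$ and $v_5$. The chord sets are: $E_1=\emptyset$; $E_2=\{v_1v_4\}$; $E_3=\{v_1v_4,v_1v_6\}$; $E_4=\{v_1v_4,v_2v_5\}$; $E_5=\{v_1v_4,v_5v_8\}$; $E_6=\{v_1v_4,v_1v_6,v_2v_5\}$; $E_7=\{v_1v_4,v_1v_6,v_2v_5,v_5v_8\}$. (Equivalently, $G_{i,9}$ is the order-$9$ graph with one added vertex $v$ adjacent to $v_1,v_5$, and $G_{i,n}$ is obtained from it by duplicating $v$ $n-9$ times, where duplicating $v$ means adding a new vertex with neighborhood $N(v)$.) *)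

theory Defs
  imports Main
begin

definition simple_graph :: "'a set \<Rightarrow> ('a \<Rightarrow> 'a \<Rightarrow> bool) \<Rightarrow> bool" where
  "simple_graph V E \<longleftrightarrow> finite V \<and> (\<forall>x y. E x y \<longrightarrow> x \<in> V \<and> y \<in> V)
     \<and> (\<forall>x y. E x y \<longrightarrow> E y x) \<and> (\<forall>x. \<not> E x x)"

definition connected_on :: "'a set \<Rightarrow> ('a \<Rightarrow> 'a \<Rightarrow> bool) \<Rightarrow> bool" where
  "connected_on S E \<longleftrightarrow> S \<noteq> {} \<and>
     (\<forall>x\<in>S. \<forall>y\<in>S. (\<lambda>a b. E a b \<and> a \<in> S \<and> b \<in> S)\<^sup>*\<^sup>* x y)"

definition two_connected :: "'a set \<Rightarrow> ('a \<Rightarrow> 'a \<Rightarrow> bool) \<Rightarrow> bool" where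
  "two_connected V E \<longleftrightarrow> card V \<ge> 3 \<and> connected_on V E \<and> (\<forall>v\<in>V. connected_on (V - {v}) E)"

definition bipartite :: "'a set \<Rightarrow> ('a \<Rightarrow> 'a \<Rightarrow> bool) \<Rightarrow> bool" where
  "bipartite V E \<longleftrightarrow> (\<exists>A. A \<subseteq> V \<and> (\<forall>x y. E x y \<longrightarrow> (x \<in> A \<longleftrightarrow> y \<notin> A)))"

definition is_cycle :: "'a set \<Rightarrow> ('a \<Rightarrow> 'a \<Rightarrow> bool) \<Rightarrow> 'a list \<Rightarrow> bool" where
  "is_cycle V E c \<longleftrightarrow> length c \<ge> 3 \<and> distinct c \<and> set c \<subseteq> V \<and>
     (\<forall>i < length c. E (c ! i) (c ! ((i + 1) mod length c)))"

definition cummerbund :: "'a set \<Rightarrow> ('a \<Rightarrow> 'a \<Rightarrow> bool) \<Rightarrow> 'a list \<Rightarrow> bool" where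
  "cummerbund V E c \<longleftrightarrow> is_cycle V E c \<and> (\<forall>d. is_cycle V E d \<longrightarrow> length d \<le> length c)"

definition cc :: "'a set \<Rightarrow> ('a \<Rightarrow> 'a \<Rightarrow> bool) \<Rightarrow> nat" where
  "cc V E = card {v \<in> V. \<exists>c. cummerbund V E c \<and> v \<in> set c}"

definition graph_iso :: "'a set \<Rightarrow> ('a \<Rightarrow> 'a \<Rightarrow> bool) \<Rightarrow> 'b set \<Rightarrow> ('b \<Rightarrow> 'b \<Rightarrow> bool) \<Rightarrow> bool" where
  "graph_iso V E W F \<longleftrightarrow> (\<exists>f. bij_betw f V W \<and> (\<forall>x\<in>V. \<forall>y\<in>V. E x y \<longleftrightarrow> F (f x) (f y)))"

text \<open>The family F_n: vertices 1..n, v_k = k for k = 1..8, extra vertices 9..n.\<close>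
definition famV :: "nat \<Rightarrow> nat set" where
  "famV n = {1..n}"

definition fam_chords :: "nat \<Rightarrow> (nat \<times> nat) set" where
  "fam_chords i =
    (if i = 1 then {}
     else if i = 2 then {(1,4)}
     else if i = 3 then {(1,4),(1,6)}
     else if i = 4 then {(1,4),(2,5)}
     else if i = 5 then {(1,4),(5,8)}
     else if i = 6 then {(1,4),(1,6),(2,5)}
     else {(1,4),(1,6),(2,5),(5,8)})"

definition fam_base :: "nat \<Rightarrow> nat \<Rightarrow> (nat \<times> nat) set" where
  "fam_base i n = {(k, k + 1) | k. 1 \<le> k \<and> k \<le> 7} \<union> {(8, 1)} \<union> fam_chords i
     \<union> {(1, j) | j. 9 \<le> j \<and> j \<le> n} \<union> {(5, j) | j. 9 \<le> j \<and> j \<le> n}"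

definition famE :: "nat \<Rightarrow> nat \<Rightarrow> nat \<Rightarrow> nat \<Rightarrow> bool" where
  "famE i n x y \<longleftrightarrow> (x, y) \<in> fam_base i n \<or> (y, x) \<in> fam_base i n"

definition in_family_F :: "'a set \<Rightarrow> ('a \<Rightarrow> 'a \<Rightarrow> bool) \<Rightarrow> nat \<Rightarrow> bool" where
  "in_family_F V E n \<longleftrightarrow> (\<exists>i\<in>{1..7}. graph_iso V E (famV n) (famE i n))"

end

theory Submission
  imports Defs
begin


lemma sg_sym: "simple_graph V E \<Longrightarrow> E x y \<Longrightarrow> E y x"
  unfolding simple_graph_def by blast
lemma sg_in1: "simple_graph V E \<Longrightarrow> E x y \<Longrightarrow> x \<in> V"
  unfolding simple_graph_def by blast
lemma sg_in2: "simple_graph V E \<Longrightarrow> E x y \<Longrightarrow> y \<in> V"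
  unfolding simple_graph_def by blast
lemma sg_irr: "simple_graph V E \<Longrightarrow> \<not> E x x"
  unfolding simple_graph_def by blast
lemma sg_fin: "simple_graph V E \<Longrightarrow> finite V"
  unfolding simple_graph_def by blast

lemma sucpred_mod: "0 < n \<Longrightarrow> Suc (n - Suc 0) mod n = 0"
  by (cases n) auto

lemma is_cycle_alt:
  "is_cycle V E c \<longleftrightarrow> length c \<ge> 3 \<and> distinct c \<and> set c \<subseteq> V \<and> successively E c \<and> E (last c) (hd c)"
proof
  assume h: "is_cycle V E c"
  then have L: "length c \<ge> 3" and ed: "\<forall>i < length c. E (c ! i) (c ! ((i + 1) mod length c))"
    unfolding is_cycle_def by auto
  have "successively E c" unfolding successively_conv_nth
  proof (intro allI impI)
    fix i assume "Suc i < length c"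
    then show "E (c ! i) (c ! Suc i)" using ed[rule_format, of i] by auto
  qed
  moreover have "E (last c) (hd c)"
  proof -
    have "E (c ! (length c - 1)) (c ! ((length c - 1 + 1) mod length c))" using ed L by auto
    moreover have "(length c - 1 + 1) mod length c = 0" using L by (cases "length c") auto
    moreover have "c \<noteq> []" using L by auto
    ultimately show ?thesis using L by (simp add: last_conv_nth hd_conv_nth)
  qed
  ultimately show "length c \<ge> 3 \<and> distinct c \<and> set c \<subseteq> V \<and> successively E c \<and> E (last c) (hd c)"
    using h unfolding is_cycle_def by auto
next
  assume h: "length c \<ge> 3 \<and> distinct c \<and> set c \<subseteq> V \<and> successively E c \<and> E (last c) (hd c)"
  have "\<forall>i < length c. E (c ! i) (c ! ((i + 1) mod length c))"
  proof (intro allI impI)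
    fix i assume i: "i < length c"
    show "E (c ! i) (c ! ((i + 1) mod length c))"
    proof (cases "Suc i < length c")
      case True then show ?thesis using h successively_nth[of E c i] by auto
    next
      case False
      then have "i = length c - 1" using i by auto
      moreover have "Suc (length c - 1) = length c" using h by auto
      moreover have "c \<noteq> []" using h by auto
      ultimately show ?thesis using h by (simp add: last_conv_nth hd_conv_nth)
    qed
  qed
  then show "is_cycle V E c" using h unfolding is_cycle_def by auto
qed

lemma cycle_edge: "is_cycle V E c \<Longrightarrow> i < length c \<Longrightarrow> E (c ! i) (c ! ((i + 1) mod length c))"
  unfolding is_cycle_def by blast

lemma cycle_len_le: assumes "is_cycle V E c" "finite V" shows "length c \<le> card V"
proof -
  have "length c = card (set c)" using assms distinct_card unfolding is_cycle_def by fastforce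
  also have "\<dots> \<le> card V" using assms card_mono unfolding is_cycle_def by blast
  finally show ?thesis .
qed

lemma cycle_even:
  assumes sg: "simple_graph V E" and bp: "bipartite V E" and cy: "is_cycle V E c"
  shows "even (length c)"
proof -
  obtain A where A: "\<forall>x y. E x y \<longrightarrow> (x \<in> A \<longleftrightarrow> y \<notin> A)" using bp unfolding bipartite_def by blast
  define L where "L = length c"
  have L3: "L \<ge> 3" using cy unfolding is_cycle_def L_def by auto
  have col: "k < L \<Longrightarrow> (c ! k \<in> A \<longleftrightarrow> (c ! 0 \<in> A \<longleftrightarrow> even k))" for k
  proof (induction k)
    case 0 then show ?case by simp
  next
    case (Suc k)
    have "E (c ! k) (c ! ((k + 1) mod L))" using cycle_edge[OF cy, of k] Suc L_def by simp
    moreover have "(k + 1) mod L = Suc k" using Suc by simp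
    ultimately have "c ! k \<in> A \<longleftrightarrow> c ! Suc k \<notin> A" using A by auto
    then show ?case using Suc by auto
  qed
  have "E (c ! (L - 1)) (c ! ((L - 1 + 1) mod L))" using cycle_edge[OF cy, of "L - 1"] L3 L_def by simp
  moreover have "(L - 1 + 1) mod L = 0" using L3 by (cases L) auto
  ultimately have "c ! (L - 1) \<in> A \<longleftrightarrow> c ! 0 \<notin> A" using A by auto
  then have "odd (L - 1)" using col[of "L - 1"] L3 by auto
  then show ?thesis using L3 L_def by auto
qed

lemma path_to_set:
  assumes con: "connected_on W E" and x: "x \<in> W" and s0: "s0 \<in> S" "s0 \<in> W"
  shows "\<exists>p. successively E p \<and> distinct p \<and> p \<noteq> [] \<and> hd p = x \<and> last p \<in> S \<and> set p \<subseteq> W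
            \<and> (\<forall>v\<in>set (butlast p). v \<notin> S)"
proof -
  let ?R = "\<lambda>a b. E a b \<and> a \<in> W \<and> b \<in> W"
  have r: "?R\<^sup>*\<^sup>* x s0" using con x s0 unfolding connected_on_def by blast
  have "x \<in> W \<longrightarrow> (\<exists>p. successively E p \<and> distinct p \<and> p \<noteq> [] \<and> hd p = x \<and> last p \<in> S \<and> set p \<subseteq> W
            \<and> (\<forall>v\<in>set (butlast p). v \<notin> S))"
    using r
  proof (induction rule: converse_rtranclp_induct)
    case base
    then show ?case using s0 by (intro impI exI[of _ "[s0]"]) auto
  next
    case (step a b)
    then obtain p where p: "successively E p" "distinct p" "p \<noteq> []" "hd p = b" "last p \<in> S" "set p \<subseteq> W"
      "\<forall>v\<in>set (butlast p). v \<notin> S" by blast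
    have aW: "a \<in> W" and eab: "E a b" using step by auto
    show ?case
    proof (cases "a \<in> S")
      case True then show ?thesis using aW by (intro impI exI[of _ "[a]"]) auto
    next
      case aS: False
      show ?thesis
      proof (cases "a \<in> set p")
        case True
        then obtain ys zs where pe: "p = ys @ a # zs" by (meson split_list)
        let ?q = "a # zs"
        have "successively E ?q" using p(1) pe successively_append_iff by metis
        moreover have "distinct ?q" using p(2) pe by simp
        moreover have "last ?q = last p" using pe by simp
        moreover have "set ?q \<subseteq> W" using p(6) pe by auto
        moreover have "butlast p = ys @ butlast ?q" using pe by (simp add: butlast_append)
        then have "set (butlast ?q) \<subseteq> set (butlast p)" by auto
        ultimately show ?thesis using p by (intro impI exI[of _ ?q]) auto
      next
        case False
        let ?q = "a # p"
        have "successively E ?q" using p eab by (auto simp: successively_Cons)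
        moreover have "butlast ?q = a # butlast p" using p(3) by simp
        ultimately show ?thesis using p False aS aW by (intro impI exI[of _ ?q]) auto
      qed
    qed
  qed
  then show ?thesis using x by blast
qed


lemma cycle_rotate: assumes "is_cycle V E c" shows "is_cycle V E (rotate k c)"
  unfolding is_cycle_def
proof (intro conjI allI impI)
  show "3 \<le> length (rotate k c)" "distinct (rotate k c)" "set (rotate k c) \<subseteq> V"
    using assms unfolding is_cycle_def by auto
  fix i assume i: "i < length (rotate k c)"
  let ?L = "length c"
  have L: "?L \<ge> 3" using assms unfolding is_cycle_def by auto
  have i': "i < ?L" using i by simp
  have m: "(k + i) mod ?L < ?L" using L by (intro mod_less_divisor) linarith
  have "E (c ! ((k + i) mod ?L)) (c ! (((k + i) mod ?L + 1) mod ?L))"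
    using cycle_edge[OF assms m] .
  moreover have "((k + i) mod ?L + 1) mod ?L = (k + (i + 1) mod ?L) mod ?L"
    by (metis add.assoc mod_add_left_eq mod_add_right_eq)
  moreover have "rotate k c ! i = c ! ((k + i) mod ?L)" using nth_rotate[OF i'] .
  moreover have m2: "(i + 1) mod ?L < ?L" using L by (intro mod_less_divisor) linarith
  moreover have "rotate k c ! ((i + 1) mod ?L) = c ! ((k + (i + 1) mod ?L) mod ?L)" using nth_rotate[OF m2] .
  ultimately show "E (rotate k c ! i) (rotate k c ! ((i + 1) mod length (rotate k c)))"
    by simp
qed

lemma neighbor_exists:
  assumes "connected_on W E" "x \<in> W" "t \<in> W" "t \<noteq> x"
  shows "\<exists>y\<in>W. E x y"
proof -
  have "(\<lambda>a b. E a b \<and> a \<in> W \<and> b \<in> W)\<^sup>*\<^sup>* x t" using assms unfolding connected_on_def by blast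
  then show ?thesis using assms(4) by (cases rule: converse_rtranclpE) auto
qed

lemma third_vertex:
  assumes "finite V" "card V \<ge> 3" shows "\<exists>t\<in>V. t \<noteq> u \<and> t \<noteq> v"
proof (rule ccontr)
  assume "\<not> ?thesis"
  then have "V \<subseteq> {u, v}" by auto
  then have "card V \<le> card {u, v}" by (simp add: card_mono)
  also have "\<dots> \<le> 2" by (simp add: card_insert_le_m1)
  finally show False using assms by simp
qed

lemma exists_cycle:
  assumes sg: "simple_graph V E" and tc: "two_connected V E"
  shows "\<exists>c. is_cycle V E c"
proof -
  have fin: "finite V" using sg sg_fin by blast
  have c3: "card V \<ge> 3" and con: "connected_on V E" and cut: "\<forall>v\<in>V. connected_on (V - {v}) E"
    using tc unfolding two_connected_def by auto
  obtain u where u: "u \<in> V" using c3 by fastforce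
  obtain t where t: "t \<in> V" "t \<noteq> u" using third_vertex[OF fin c3, of u u] by blast
  obtain v where v: "v \<in> V" "E u v" using neighbor_exists[OF con u t(1) t(2)] by blast
  have vu: "v \<noteq> u" using v sg_irr[OF sg] by blast
  obtain t2 where t2: "t2 \<in> V" "t2 \<noteq> u" "t2 \<noteq> v" using third_vertex[OF fin c3, of u v] by blast
  obtain w where w: "w \<in> V - {v}" "E u w"
    using neighbor_exists[OF cut[rule_format, OF v(1)], of u t2] u vu t2 by blast
  have wu: "w \<noteq> u" using w sg_irr[OF sg] by blast
  obtain p where p: "successively E p" "distinct p" "p \<noteq> []" "hd p = v" "last p \<in> {w}" "set p \<subseteq> V - {u}"
    using path_to_set[OF cut[rule_format, OF u], of v w "{w}"] v vu w wu by blast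
  have "length p \<ge> 2"
  proof (rule ccontr)
    assume "\<not> ?thesis"
    then have "p = [hd p]" using p(3) by (cases p) (auto simp: Suc_le_eq)
    then have "v = w" using p by (metis last_ConsL singletonD)
    then show False using w by auto
  qed
  moreover have "u \<notin> set p" using p(6) by auto
  moreover have "E (last (u # p)) (hd (u # p))" using p(3,5) w sg_sym[OF sg] by auto
  ultimately have "is_cycle V E (u # p)"
    unfolding is_cycle_alt using p u v by (auto simp: successively_Cons)
  then show ?thesis by blast
qed

lemma exists_cummerbund:
  assumes sg: "simple_graph V E" and ex: "is_cycle V E c0"
  shows "\<exists>c. cummerbund V E c"
proof -
  have fin: "finite V" using sg sg_fin by blast
  let ?S = "length ` {c. is_cycle V E c}"
  have sub: "?S \<subseteq> {..card V}" using cycle_len_le[OF _ fin] by auto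
  then have finS: "finite ?S" using finite_subset by blast
  have ne: "?S \<noteq> {}" using ex by blast
  obtain c where c: "is_cycle V E c" "length c = Max ?S" using Max_in[OF finS ne] by auto
  have "\<forall>d. is_cycle V E d \<longrightarrow> length d \<le> length c" using Max_ge[OF finS] c(2) by auto
  then show ?thesis using c unfolding cummerbund_def by blast
qed

definition cset :: "'a set \<Rightarrow> ('a \<Rightarrow> 'a \<Rightarrow> bool) \<Rightarrow> 'a set" where
  "cset V E = {v \<in> V. \<exists>c. cummerbund V E c \<and> v \<in> set c}"

lemma cc_cset: "cc V E = card (cset V E)" unfolding cc_def cset_def by simp

lemma cummerbund_sub_cset: "cummerbund V E c \<Longrightarrow> set c \<subseteq> cset V E"
  unfolding cset_def cummerbund_def is_cycle_def by blast

lemma crossing_edge: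
  assumes con: "connected_on V E" and "U \<subseteq> V" "u0 \<in> U" "z0 \<in> V" "z0 \<notin> U"
  shows "\<exists>u z. u \<in> U \<and> z \<in> V \<and> z \<notin> U \<and> E u z"
proof -
  obtain p where p: "successively E p" "distinct p" "p \<noteq> []" "hd p = u0" "last p \<in> V - U" "set p \<subseteq> V"
    "\<forall>v\<in>set (butlast p). v \<notin> V - U"
    using path_to_set[OF con, of u0 z0 "V - U"] assms by blast
  have bn: "butlast p \<noteq> []"
  proof
    assume "butlast p = []"
    then have "p = [hd p]" using p(3) by (cases p) (auto split: if_splits)
    then show False using p assms by (metis DiffD2 last_ConsL)
  qed
  have pe: "p = butlast p @ [last p]" using p(3) by simp
  have "E (last (butlast p)) (last p)" using p(1) pe bn successively_append_iff by (metis list.sel(1) not_Cons_self2)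
  moreover have "last (butlast p) \<in> U"
  proof -
    have "last (butlast p) \<in> set (butlast p)" using bn by simp
    moreover have "set (butlast p) \<subseteq> V" using p(6) by (meson in_set_butlastD subsetD subsetI)
    ultimately show ?thesis using p(7) by blast
  qed
  ultimately show ?thesis using p(5) by blast
qed


lemma nth_notin_take: "distinct xs \<Longrightarrow> d < length xs \<Longrightarrow> xs ! d \<notin> set (take d xs)"
proof
  assume as: "distinct xs" "d < length xs" "xs ! d \<in> set (take d xs)"
  then obtain k where k: "k < length (take d xs)" "take d xs ! k = xs ! d" by (metis in_set_conv_nth)
  then have "k < d" "xs ! k = xs ! d" by auto
  then show False using as nth_eq_iff_index_eq by fastforce
qed

lemma ear_cycle:
  assumes cy: "is_cycle V E c" and ij: "i < length c" "j < length c" "i \<noteq> j"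
    and R: "successively E R" "distinct R" "set R \<subseteq> V" "hd R = c ! i" "last R = c ! j"
      "\<forall>v\<in>set R. v \<in> set c \<longrightarrow> v = c ! i \<or> v = c ! j" "length R \<ge> 3"
  shows "\<exists>D. is_cycle V E D \<and> length D = length R - 1 + (i + length c - j) mod length c
             \<and> set (butlast R) \<subseteq> set D"
proof -
  define L where "L = length c"
  define d where "d = (i + L - j) mod L"
  define rc where "rc = rotate j c"
  define A where "A = take d rc"
  define B where "B = butlast R"
  have L3: "L \<ge> 3" using cy unfolding is_cycle_def L_def by auto
  have iL: "i < L" "j < L" using ij L_def by auto
  have cyr: "is_cycle V E rc" using cycle_rotate[OF cy] rc_def by simp
  have lrc: "length rc = L" using rc_def L_def by simp
  have dval: "d = (if j \<le> i then i - j else i + L - j)"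
  proof (cases "j \<le> i")
    case True
    then have eq: "i + L - j = (i - j) + L" by simp
    have "(i - j + L) mod L = i - j" using iL by simp
    then show ?thesis using True unfolding d_def eq by simp
  next
    case False
    then show ?thesis using iL d_def by simp
  qed
  have d1: "d \<ge> 1" "d < L" using dval iL ij(3) by (auto split: if_splits)
  have jd: "(j + d) mod L = i"
  proof (cases "j \<le> i")
    case True then show ?thesis using dval iL by simp
  next
    case False
    then have "j + d = i + L" using dval iL by simp
    then show ?thesis using iL by simp
  qed
  have rcd: "rc ! d = c ! i" using nth_rotate[of d c j] d1 jd rc_def L_def by simp
  have cne: "c \<noteq> []" using L3 L_def by auto
  have rc0: "rc ! 0 = c ! j" using nth_rotate[of 0 c j] cne ij rc_def by simp
  have drc: "distinct rc" and srcV: "set rc = set c" and srE: "successively E rc"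
    using cyr cy unfolding is_cycle_alt rc_def by auto
  have A1: "distinct A" using drc A_def by simp
  have A2: "successively E A"
    using srE append_take_drop_id[of d rc] successively_append_iff A_def by metis
  have A3: "set A \<subseteq> set c" using srcV A_def by (metis set_take_subset)
  have lA: "length A = d" using A_def lrc d1 by simp
  have Ane: "A \<noteq> []" using lA d1 by auto
  have rcne: "rc \<noteq> []" using lrc L3 by auto
  have hA: "hd A = c ! j" using A_def d1 rc0 rcne by (simp add: hd_conv_nth)
  have lastA: "last A = rc ! (d - 1)" using A_def d1 lrc Ane by (simp add: last_conv_nth)
  have eA: "E (rc ! (d - 1)) (rc ! d)" using successively_nth[OF srE, of "d - 1"] d1 lrc by simp
  have ciA: "c ! i \<notin> set A" using nth_notin_take[OF drc, of d] d1 lrc rcd A_def by simp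
  have Rne: "R \<noteq> []" using R by auto
  have Re: "R = B @ [c ! j]" using R(5) Rne B_def by (metis append_butlast_last_id)
  have lB: "length B = length R - 1" using B_def by simp
  have Bne: "B \<noteq> []" using lB R(7) by auto
  have B1: "distinct B" using R(2) Re by (metis distinct_append)
  have B2: "successively E B" and eB: "E (last B) (c ! j)"
    using R(1) Re Bne successively_append_iff by (metis list.sel(1) not_Cons_self2)+
  have hB: "hd B = c ! i" using R(4) Re Bne by simp
  have cjB: "c ! j \<notin> set B" using R(2) Re by simp
  have BV: "set B \<subseteq> V" using R(3) Re by auto
  have Bc: "\<forall>v\<in>set B. v \<in> set c \<longrightarrow> v = c ! i" using R(6) Re cjB by auto
  have disj: "set B \<inter> set A = {}" using Bc A3 ciA by blast
  have AV: "set A \<subseteq> V" using A3 cy unfolding is_cycle_def by blast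
  define D where "D = B @ A"
  have "is_cycle V E D" unfolding is_cycle_alt
  proof (intro conjI)
    show "3 \<le> length D" using lB lA R(7) d1 D_def by simp
    show "distinct D" using B1 A1 disj D_def by simp
    show "set D \<subseteq> V" using BV AV D_def by simp
    show "successively E D" using B2 A2 eB hA D_def successively_append_iff by metis
    show "E (last D) (hd D)" using lastA eA rcd hB Ane Bne D_def by simp
  qed
  moreover have "length D = length R - 1 + (i + length c - j) mod length c"
    using lB lA D_def d_def L_def by simp
  moreover have "set (butlast R) \<subseteq> set D" using B_def D_def by simp
  ultimately show ?thesis by blast
qed


locale G2 =
  fixes V :: "'a set" and E :: "'a \<Rightarrow> 'a \<Rightarrow> bool"
  assumes sg: "simple_graph V E" and tc: "two_connected V E" and bp: "bipartite V E"
begin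

lemma fin: "finite V" using sg sg_fin by blast
lemma sym: "E x y \<Longrightarrow> E y x" using sg sg_sym by metis
lemma inV1: "E x y \<Longrightarrow> x \<in> V" using sg sg_in1 by metis
lemma inV2: "E x y \<Longrightarrow> y \<in> V" using sg sg_in2 by metis
lemma irr: "\<not> E x x" using sg sg_irr by metis
lemma con: "connected_on V E" using tc unfolding two_connected_def by blast
lemma cut: "v \<in> V \<Longrightarrow> connected_on (V - {v}) E" using tc unfolding two_connected_def by blast
lemma even_cycle: "is_cycle V E c \<Longrightarrow> even (length c)" using cycle_even[OF sg bp] .

lemma cset_sub: "cset V E \<subseteq> V" unfolding cset_def by blast
lemma cset_fin: "finite (cset V E)" using fin cset_sub finite_subset by blast

lemma dsum: fixes i j L :: nat assumes "i < L" "j < L" "i \<noteq> j"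
  shows "(i + L - j) mod L + (j + L - i) mod L = L"
proof (cases "i < j")
  case True
  have "j + L - i = (j - i) + L" using True by arith
  then have "(j + L - i) mod L = ((j - i) + L) mod L" by (simp only:)
  also have "\<dots> = j - i" using assms by simp
  finally show ?thesis using True assms by simp
next
  case False
  have "i + L - j = (i - j) + L" using False by arith
  then have "(i + L - j) mod L = ((i - j) + L) mod L" by (simp only:)
  also have "\<dots> = i - j" using assms by simp
  finally show ?thesis using False assms by simp
qed

lemma ear_bound:
  assumes cb: "cummerbund V E c" and ij: "i < length c" "j < length c" "i \<noteq> j"
    and R: "successively E R" "distinct R" "set R \<subseteq> V" "hd R = c ! i" "last R = c ! j"
      "\<forall>v\<in>set R. v \<in> set c \<longrightarrow> v = c ! i \<or> v = c ! j" "length R \<ge> 3"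
    and z: "z \<in> set R" "z \<notin> cset V E"
  shows "length R - 1 + (i + length c - j) mod length c + 2 \<le> length c"
    and "length R - 1 + (j + length c - i) mod length c + 2 \<le> length c"
proof -
  have cy: "is_cycle V E c" using cb unfolding cummerbund_def by blast
  have zc: "z \<notin> set c" using z cummerbund_sub_cset[OF cb] by blast
  have zV: "z \<in> V" using z R by blast
  have Le: "even (length c)" using even_cycle[OF cy] .
  have key: "length D + 2 \<le> length c" if D: "is_cycle V E D" "z \<in> set D" for D
  proof -
    have "length D \<le> length c" using cb D unfolding cummerbund_def by blast
    moreover have "length D \<noteq> length c"
    proof
      assume "length D = length c"
      then have "cummerbund V E D" using cb D unfolding cummerbund_def by simp
      then show False using z D zV unfolding cset_def by blast
    qed
    moreover have "even (length D)" using even_cycle D by blast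
    ultimately show ?thesis using Le by (metis add_2_eq_Suc' le_neq_implies_less even_Suc odd_Suc_minus_one Suc_leI le_SucE nat_less_le)
  qed
  obtain D where D: "is_cycle V E D" "length D = length R - 1 + (i + length c - j) mod length c"
    "set (butlast R) \<subseteq> set D" using ear_cycle[OF cy ij R] by blast
  have Rne: "R \<noteq> []" using R by auto
  have "z \<in> set (butlast R)"
  proof -
    have "z \<noteq> last R" using R(5) zc ij by auto
    then show ?thesis using z(1) Rne by (metis append_butlast_last_id in_set_butlast_appendI rotate1.simps(2) set_rotate1 set_ConsD)
  qed
  then have "z \<in> set D" using D(3) by blast
  then show "length R - 1 + (i + length c - j) mod length c + 2 \<le> length c" using key[OF D(1)] D(2) by simp
  have R': "successively E (rev R)" "distinct (rev R)" "set (rev R) \<subseteq> V" "hd (rev R) = c ! j"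
      "last (rev R) = c ! i" "\<forall>v\<in>set (rev R). v \<in> set c \<longrightarrow> v = c ! j \<or> v = c ! i" "length (rev R) \<ge> 3"
    using R Rne by (auto simp: hd_rev last_rev intro: successively_mono sym)
  obtain D' where D': "is_cycle V E D'" "length D' = length (rev R) - 1 + (j + length c - i) mod length c"
    "set (butlast (rev R)) \<subseteq> set D'" using ear_cycle[OF cy ij(2,1) ij(3)[symmetric] R'] by blast
  have "z \<in> set (butlast (rev R))"
  proof -
    have "z \<noteq> hd R" using R(4) zc ij by auto
    then have "z \<in> set (tl R)" using z(1) Rne by (cases R) auto
    then show ?thesis by (simp add: butlast_rev)
  qed
  then have "z \<in> set D'" using D'(3) by blast
  then show "length R - 1 + (j + length c - i) mod length c + 2 \<le> length c" using key[OF D'(1)] D'(2) by simp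
qed

lemma ear_bound2:
  assumes cb: "cummerbund V E c" and ij: "i < length c" "j < length c" "i \<noteq> j"
    and R: "successively E R" "distinct R" "set R \<subseteq> V" "hd R = c ! i" "last R = c ! j"
      "\<forall>v\<in>set R. v \<in> set c \<longrightarrow> v = c ! i \<or> v = c ! j" "length R \<ge> 3"
    and z: "z \<in> set R" "z \<notin> cset V E"
  shows "2 * (length R - 1) + 4 \<le> length c"
  using ear_bound[OF assms] dsum[OF ij] by linarith

lemma ear_from_adj:
  assumes cy: "is_cycle V E c" and i: "i < length c" and z: "z \<in> V" "z \<notin> set c" and e: "E (c ! i) z"
  shows "\<exists>j R. j < length c \<and> j \<noteq> i \<and> successively E R \<and> distinct R \<and> set R \<subseteq> V \<and> hd R = c ! i
     \<and> last R = c ! j \<and> (\<forall>v\<in>set R. v \<in> set c \<longrightarrow> v = c ! i \<or> v = c ! j) \<and> length R \<ge> 3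
     \<and> z \<in> set R \<and> tl R = z # tl (tl R)"
proof -
  let ?L = "length c"
  let ?u = "c ! i"
  have L3: "?L \<ge> 3" using cy unfolding is_cycle_def by auto
  have dc: "distinct c" and cV: "set c \<subseteq> V" using cy unfolding is_cycle_def by auto
  have uV: "?u \<in> V" using i cV by auto
  let ?k = "(i + 1) mod ?L"
  have kL: "?k < ?L" using L3 by (intro mod_less_divisor) linarith
  have ki: "?k \<noteq> i"
  proof (cases "i + 1 < ?L")
    case True then have "?k = i + 1" by simp
    then show ?thesis by simp
  next
    case False then have "i + 1 = ?L" using i by simp
    then have "?k = 0" by simp
    then show ?thesis using L3 False by auto
  qed
  have s0: "c ! ?k \<in> set c" "c ! ?k \<in> V - {?u}" using kL ki dc i cV nth_eq_iff_index_eq by fastforce+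
  have zW: "z \<in> V - {?u}" using z i by auto
  obtain p where p: "successively E p" "distinct p" "p \<noteq> []" "hd p = z" "last p \<in> set c"
     "set p \<subseteq> V - {?u}" "\<forall>v\<in>set (butlast p). v \<notin> set c"
    using path_to_set[OF cut[OF uV] zW s0(1) s0(2)] by blast
  obtain j where j: "j < ?L" "last p = c ! j" using p(5) by (metis in_set_conv_nth)
  have "last p \<in> set p" using p(3) by simp
  then have ji: "j \<noteq> i" using j p(6) by auto
  let ?R = "?u # p"
  have "length p \<ge> 2"
  proof (rule ccontr)
    assume "\<not> ?thesis"
    then have "p = [hd p]" using p(3) by (cases p) (auto simp: Suc_le_eq)
    then show False using p z by (metis last_ConsL)
  qed
  moreover have "successively E ?R" using p e by (auto simp: successively_Cons)
  moreover have "distinct ?R" using p by auto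
  moreover have "\<forall>v\<in>set ?R. v \<in> set c \<longrightarrow> v = c ! i \<or> v = c ! j"
  proof
    fix v assume v: "v \<in> set ?R"
    show "v \<in> set c \<longrightarrow> v = c ! i \<or> v = c ! j"
    proof (cases "v = ?u")
      case False
      then have "v \<in> set p" using v by auto
      then have "v \<in> set (butlast p) \<or> v = last p" using p(3) by (metis append_butlast_last_id rotate1.simps(2) set_ConsD set_rotate1 in_set_butlast_appendI)
      then show ?thesis using p(7) j by auto
    qed auto
  qed
  moreover have "tl ?R = z # tl (tl ?R)" using p(3,4) by (cases p) auto
  ultimately show ?thesis using j ji p uV by (intro exI[of _ j] exI[of _ ?R]) auto
qed

lemma adj_cummerbund_len:
  assumes cb: "cummerbund V E c" and i: "i < length c" and z: "z \<in> V" "z \<notin> cset V E" and e: "E (c ! i) z"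
  shows "length c \<ge> 8"
proof -
  have cy: "is_cycle V E c" using cb unfolding cummerbund_def by blast
  have zc: "z \<notin> set c" using z cummerbund_sub_cset[OF cb] by blast
  obtain j R where jR: "j < length c" "j \<noteq> i" "successively E R" "distinct R" "set R \<subseteq> V" "hd R = c ! i"
     "last R = c ! j" "\<forall>v\<in>set R. v \<in> set c \<longrightarrow> v = c ! i \<or> v = c ! j" "length R \<ge> 3" "z \<in> set R"
    using ear_from_adj[OF cy i z(1) zc e] by blast
  have "2 * (length R - 1) + 4 \<le> length c"
    using ear_bound2[OF cb i jR(1) jR(2)[symmetric] jR(3-9) jR(10) z(2)] .
  then show ?thesis using jR(9) by linarith
qed

lemma small_all:
  assumes cb: "cummerbund V E c" and L: "length c < 8"
  shows "cset V E = V"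
proof (rule ccontr)
  assume ne: "cset V E \<noteq> V"
  then obtain z0 where z0: "z0 \<in> V" "z0 \<notin> cset V E" using cset_sub by blast
  have cy: "is_cycle V E c" using cb unfolding cummerbund_def by blast
  have "0 < length c" using cy unfolding is_cycle_def by auto
  then have "c ! 0 \<in> set c" by (rule nth_mem)
  then have u0: "c ! 0 \<in> cset V E" using cummerbund_sub_cset[OF cb] by blast
  obtain u z where uz: "u \<in> cset V E" "z \<in> V" "z \<notin> cset V E" "E u z"
    using crossing_edge[OF con cset_sub u0 z0] by blast
  obtain c' where c': "cummerbund V E c'" "u \<in> set c'" using uz(1) unfolding cset_def by blast
  obtain i where i: "i < length c'" "c' ! i = u" using c'(2) by (metis in_set_conv_nth)
  have "length c' \<ge> 8" using adj_cummerbund_len[OF c'(1) i(1) uz(2,3)] uz(4) i(2) by simp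
  moreover have "length c' = length c" using cb c' unfolding cummerbund_def by (simp add: le_antisym)
  ultimately show False using L by simp
qed

end


definition adj8 :: "bool \<Rightarrow> bool \<Rightarrow> bool \<Rightarrow> bool \<Rightarrow> nat \<Rightarrow> nat \<Rightarrow> bool" where
  "adj8 b03 b05 b14 b47 p q \<longleftrightarrow>
     (p, q) \<in> {(0,1),(1,0),(1,2),(2,1),(2,3),(3,2),(3,4),(4,3),(4,5),(5,4),(5,6),(6,5),(6,7),(7,6),(7,0),(0,7)}
     \<or> (b03 \<and> (p, q) \<in> {(0,3),(3,0)}) \<or> (b05 \<and> (p, q) \<in> {(0,5),(5,0)})
     \<or> (b14 \<and> (p, q) \<in> {(1,4),(4,1)}) \<or> (b47 \<and> (p, q) \<in> {(4,7),(7,4)})"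

lemma less8_cases: "(p::nat) < 8 \<Longrightarrow> p = 0 \<or> p = 1 \<or> p = 2 \<or> p = 3 \<or> p = 4 \<or> p = 5 \<or> p = 6 \<or> p = 7"
  by arith

lemma fam_base_iff: "(a, b) \<in> fam_base i n \<longleftrightarrow> (1 \<le> a \<and> a \<le> 7 \<and> b = a + 1) \<or> (a = 8 \<and> b = 1) \<or> (a, b) \<in> fam_chords i
   \<or> (a = 1 \<and> 9 \<le> b \<and> b \<le> n) \<or> (a = 5 \<and> 9 \<le> b \<and> b \<le> n)"
  unfolding fam_base_def by blast

definition "f03 i \<longleftrightarrow> (i::nat) \<noteq> 1"
definition "f05 i \<longleftrightarrow> (i::nat) \<noteq> 1 \<and> i \<noteq> 2 \<and> i \<noteq> 4 \<and> i \<noteq> 5"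
definition "f14 i \<longleftrightarrow> (i::nat) = 4 \<or> i \<noteq> 1 \<and> i \<noteq> 2 \<and> i \<noteq> 3 \<and> i \<noteq> 5"
definition "f47 i \<longleftrightarrow> (i::nat) = 5 \<or> i \<noteq> 1 \<and> i \<noteq> 2 \<and> i \<noteq> 3 \<and> i \<noteq> 4 \<and> i \<noteq> 6"

lemma fam_chords_iff: "(a, b) \<in> fam_chords i \<longleftrightarrow> (a = 1 \<and> b = 4 \<and> f03 i) \<or> (a = 1 \<and> b = 6 \<and> f05 i)
   \<or> (a = 2 \<and> b = 5 \<and> f14 i) \<or> (a = 5 \<and> b = 8 \<and> f47 i)"
  unfolding fam_chords_def f03_def f05_def f14_def f47_def by auto

definition fbase :: "nat \<Rightarrow> nat \<Rightarrow> nat \<Rightarrow> nat \<Rightarrow> bool" where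
  "fbase i n a b \<longleftrightarrow> (1 \<le> a \<and> a \<le> 7 \<and> b = a + 1) \<or> (a = 8 \<and> b = 1) \<or> (a = 1 \<and> b = 4 \<and> f03 i) \<or> (a = 1 \<and> b = 6 \<and> f05 i)
   \<or> (a = 2 \<and> b = 5 \<and> f14 i) \<or> (a = 5 \<and> b = 8 \<and> f47 i)
   \<or> (a = 1 \<and> 9 \<le> b \<and> b \<le> n) \<or> (a = 5 \<and> 9 \<le> b \<and> b \<le> n)"

lemma famE_iff: "famE i n a b \<longleftrightarrow> fbase i n a b \<or> fbase i n b a"
  unfolding famE_def fam_base_iff fam_chords_iff fbase_def by (simp only: prod.inject disj_assoc)

lemma fam_adj8:
  assumes "p < 8" "q < 8"
  shows "famE i n (p + 1) (q + 1) \<longleftrightarrow> adj8 (f03 i) (f05 i) (f14 i) (f47 i) p q"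
  using less8_cases[OF assms(1)] less8_cases[OF assms(2)]
  unfolding famE_iff fbase_def adj8_def by (elim disjE) simp_all

lemma fam_ext:
  assumes "1 \<le> a" "a \<le> 8" "9 \<le> b" "b \<le> n"
  shows "famE i n a b \<longleftrightarrow> a = 1 \<or> a = 5" and "famE i n b a \<longleftrightarrow> a = 1 \<or> a = 5"
  using assms unfolding famE_iff fbase_def by auto

lemma fam_ext2:
  assumes "9 \<le> a" "9 \<le> b"
  shows "\<not> famE i n a b"
  using assms unfolding famE_iff fbase_def by auto

lemma fam_in: "famE i n a b \<Longrightarrow> 9 \<le> n \<Longrightarrow> a \<in> {1..n} \<and> b \<in> {1..n}"
  unfolding famE_iff fbase_def by auto

lemma fam_odd: "famE i n a b \<Longrightarrow> (a \<in> {1,3,5,7} \<longleftrightarrow> b \<notin> {1,3,5,7})"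
  unfolding famE_iff fbase_def by auto

lemma fam_3: "famE i n 3 b \<Longrightarrow> b = 2 \<or> b = 4"
  unfolding famE_iff fbase_def by auto
lemma fam_7: "famE i n 7 b \<Longrightarrow> b = 6 \<or> b = 8"
  unfolding famE_iff fbase_def by auto


lemma iso_cycle:
  assumes f: "bij_betw f V W" and e: "\<forall>x\<in>V. \<forall>y\<in>V. E x y \<longleftrightarrow> F (f x) (f y)" and c: "is_cycle V E c"
  shows "is_cycle W F (map f c)"
proof -
  have cV: "set c \<subseteq> V" and dc: "distinct c" and l: "length c \<ge> 3" and s: "successively E c"
    and cl: "E (last c) (hd c)" using c unfolding is_cycle_alt by auto
  have inj: "inj_on f (set c)" using inj_on_subset[OF bij_betw_imp_inj_on[OF f] cV] .
  have "distinct (map f c)" using dc inj by (simp add: distinct_map)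
  moreover have "set (map f c) \<subseteq> W" using bij_betw_imp_surj_on[OF f] cV by auto
  moreover have "successively F (map f c)" unfolding successively_map
    using s by (rule successively_mono) (use e cV in blast)
  moreover have "F (last (map f c)) (hd (map f c))"
  proof -
    have cn: "c \<noteq> []" using l by auto
    then have "last c \<in> set c" "hd c \<in> set c" by auto
    then have "last c \<in> V" "hd c \<in> V" using cV by auto
    then show ?thesis using cn cl e by (simp add: last_map hd_map)
  qed
  ultimately show ?thesis using l unfolding is_cycle_alt by simp
qed

lemma iso_inv:
  assumes f: "bij_betw f V W" and e: "\<forall>x\<in>V. \<forall>y\<in>V. E x y \<longleftrightarrow> F (f x) (f y)"
  shows "bij_betw (inv_into V f) W V \<and> (\<forall>a\<in>W. \<forall>b\<in>W. F a b \<longleftrightarrow> E (inv_into V f a) (inv_into V f b))"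
proof -
  let ?g = "inv_into V f"
  have g: "bij_betw ?g W V" using f by (rule bij_betw_inv_into)
  have "\<forall>a\<in>W. \<forall>b\<in>W. F a b \<longleftrightarrow> E (?g a) (?g b)"
  proof (intro ballI)
    fix a b assume ab: "a \<in> W" "b \<in> W"
    have "f (?g a) = a" "f (?g b) = b" using ab f by (auto simp: bij_betw_inv_into_right)
    moreover have "?g a \<in> V" "?g b \<in> V" using ab bij_betwE[OF g] by auto
    ultimately show "F a b \<longleftrightarrow> E (?g a) (?g b)" using e[rule_format, of "?g a" "?g b"] by simp
  qed
  then show ?thesis using g by blast
qed

lemma iso_cummerbund:
  assumes f: "bij_betw f V W" and e: "\<forall>x\<in>V. \<forall>y\<in>V. E x y \<longleftrightarrow> F (f x) (f y)" and c: "cummerbund V E c"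
  shows "cummerbund W F (map f c)"
proof -
  obtain g where g: "bij_betw g W V" "\<forall>a\<in>W. \<forall>b\<in>W. F a b \<longleftrightarrow> E (g a) (g b)"
    using iso_inv[OF f e] by blast
  have "is_cycle W F (map f c)" using iso_cycle[OF f e] c unfolding cummerbund_def by blast
  moreover have "length d \<le> length (map f c)" if d: "is_cycle W F d" for d
  proof -
    have "is_cycle V E (map g d)" using iso_cycle[OF g(1) g(2) d] .
    then have "length (map g d) \<le> length c" using c unfolding cummerbund_def by blast
    then show ?thesis by simp
  qed
  ultimately show ?thesis unfolding cummerbund_def by blast
qed

lemma iso_cc:
  assumes "graph_iso V E W F"
  shows "cc V E = cc W F"
proof -
  obtain f where f: "bij_betw f V W" and e: "\<forall>x\<in>V. \<forall>y\<in>V. E x y \<longleftrightarrow> F (f x) (f y)"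
    using assms unfolding graph_iso_def by blast
  define g where "g = inv_into V f"
  have g: "bij_betw g W V" "\<forall>a\<in>W. \<forall>b\<in>W. F a b \<longleftrightarrow> E (g a) (g b)"
    using iso_inv[OF f e] g_def by auto
  have gf: "\<forall>w\<in>W. f (inv_into V f w) = w" using f by (auto simp: bij_betw_inv_into_right)
  have "cset W F = f ` cset V E"
  proof
    show "f ` cset V E \<subseteq> cset W F"
    proof
      fix w assume "w \<in> f ` cset V E"
      then obtain v c where v: "w = f v" "v \<in> V" "cummerbund V E c" "v \<in> set c" unfolding cset_def by blast
      then have "cummerbund W F (map f c)" using iso_cummerbund[OF f e] by blast
      moreover have "w \<in> set (map f c)" using v by simp
      moreover have "w \<in> W" using v bij_betwE[OF f] by auto
      ultimately show "w \<in> cset W F" unfolding cset_def by blast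
    qed
  next
    show "cset W F \<subseteq> f ` cset V E"
    proof
      fix w assume "w \<in> cset W F"
      then obtain d where d: "w \<in> W" "cummerbund W F d" "w \<in> set d" unfolding cset_def by blast
      have gg: "g = inv_into V f" using g_def by simp
      have "cummerbund V E (map (inv_into V f) d)" using iso_cummerbund[OF g(1) g(2) d(2)] gg by simp
      moreover have "inv_into V f w \<in> set (map (inv_into V f) d)" using d by simp
      moreover have "inv_into V f w \<in> V" using d(1) bij_betwE[OF g(1)] g_def by auto
      ultimately have "inv_into V f w \<in> cset V E" unfolding cset_def by blast
      then show "w \<in> f ` cset V E" using gf d(1) image_eqI[of w f "inv_into V f w"] by auto
    qed
  qed
  moreover have "inj_on f (cset V E)"
  proof -
    have "cset V E \<subseteq> V" unfolding cset_def by blast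
    then show ?thesis using inj_on_subset[OF bij_betw_imp_inj_on[OF f]] by blast
  qed
  ultimately show ?thesis unfolding cc_cset by (simp add: card_image)
qed


lemma suc_mod: "a < (L::nat) \<Longrightarrow> Suc a mod L = (if Suc a = L then 0 else Suc a)"
proof (cases "Suc a < L")
  case True then show ?thesis by simp
next
  case False
  assume "a < L" then have "Suc a = L" using False by simp
  then show ?thesis by simp
qed

lemma card_cross:
  assumes cy: "is_cycle V E d" and cr: "\<forall>x y. E x y \<longrightarrow> (x \<in> Q \<longleftrightarrow> y \<notin> Q)"
  shows "card (set d \<inter> Q) \<le> card (set d - Q)"
proof -
  define L where "L = length d"
  define I1 where "I1 = {k. k < L \<and> d ! k \<in> Q}"
  define I2 where "I2 = {k. k < L \<and> d ! k \<notin> Q}"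
  have dd: "distinct d" and L3: "L \<ge> 3" using cy unfolding is_cycle_def L_def by auto
  have e1: "set d \<inter> Q = (nth d) ` I1"
  proof
    show "set d \<inter> Q \<subseteq> (nth d) ` I1"
    proof
      fix x assume x: "x \<in> set d \<inter> Q"
      then obtain k where "k < L" "d ! k = x" unfolding L_def by (metis IntD1 in_set_conv_nth)
      then show "x \<in> (nth d) ` I1" using x unfolding I1_def by blast
    qed
    show "(nth d) ` I1 \<subseteq> set d \<inter> Q" unfolding I1_def L_def by auto
  qed
  have e2: "set d - Q = (nth d) ` I2"
  proof
    show "set d - Q \<subseteq> (nth d) ` I2"
    proof
      fix x assume x: "x \<in> set d - Q"
      then obtain k where "k < L" "d ! k = x" unfolding L_def by (metis DiffD1 in_set_conv_nth)
      then show "x \<in> (nth d) ` I2" using x unfolding I2_def by blast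
    qed
    show "(nth d) ` I2 \<subseteq> set d - Q" unfolding I2_def L_def by auto
  qed
  have i1: "inj_on (nth d) I1" by (rule inj_on_nth[OF dd]) (simp add: I1_def L_def)
  have i2: "inj_on (nth d) I2" by (rule inj_on_nth[OF dd]) (simp add: I2_def L_def)
  have fin2: "finite I2" unfolding I2_def by simp
  have inj: "inj_on (\<lambda>k. Suc k mod L) I1"
  proof
    fix a b assume ab: "a \<in> I1" "b \<in> I1" "Suc a mod L = Suc b mod L"
    then have "a < L" "b < L" unfolding I1_def by auto
    then show "a = b" using ab(3) by (simp add: suc_mod split: if_splits)
  qed
  have sub: "(\<lambda>k. Suc k mod L) ` I1 \<subseteq> I2"
  proof
    fix m assume "m \<in> (\<lambda>k. Suc k mod L) ` I1"
    then obtain k where k: "k \<in> I1" "m = Suc k mod L" by blast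
    have kl: "k < L" "d ! k \<in> Q" using k unfolding I1_def by auto
    have "E (d ! k) (d ! ((k + 1) mod L))" using cycle_edge[OF cy] kl L_def by simp
    then have "d ! m \<notin> Q" using cr kl k by auto
    moreover have "m < L" using k L3 by simp
    ultimately show "m \<in> I2" unfolding I2_def by simp
  qed
  have "card I1 \<le> card I2" using card_inj_on_le[OF inj sub fin2] .
  then show ?thesis using e1 e2 card_image[OF i1] card_image[OF i2] by simp
qed

lemma nbrs_in_cycle:
  assumes cy: "is_cycle V E d" and v: "v \<in> set d" and sy: "\<forall>x y. E x y \<longrightarrow> E y x"
  shows "\<exists>a b. a \<noteq> b \<and> a \<in> set d \<and> b \<in> set d \<and> E v a \<and> E v b"
proof -
  obtain k where k: "k < length d" "d ! k = v" using v by (metis in_set_conv_nth)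
  define rd where "rd = rotate k d"
  have cr: "is_cycle V E rd" using cycle_rotate[OF cy] rd_def by simp
  have dne: "d \<noteq> []" using k by auto
  have "rd ! 0 = v" using nth_rotate[of 0 d k] dne k rd_def by simp
  moreover have l3: "length rd \<ge> 3" using cr unfolding is_cycle_def by auto
  ultimately obtain a t where rt: "rd = v # a # t" "t \<noteq> []"
    by (cases rd; cases "tl rd"; auto simp: Suc_le_eq)
  have "successively E rd" "distinct rd" "E (last rd) (hd rd)" using cr unfolding is_cycle_alt by auto
  then have "E v a" "a \<noteq> last t" "E (last t) v" using rt by auto
  moreover have "set rd = set d" using rd_def by simp
  ultimately show ?thesis using rt sy by (intro exI[of _ a] exI[of _ "last t"]) auto
qed

lemma fam_sym: "famE i n a b \<Longrightarrow> famE i n b a"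
  unfolding famE_def by blast

lemma fam_cycle_bound:
  assumes cy: "is_cycle (famV n) (famE i n) d"
  shows "length d \<le> 8 \<and> (length d = 8 \<longrightarrow> set d = {1,2,3,4,5,6,7,8})"
proof -
  let ?Q = "{1,3,5,7::nat}"
  have cr1: "\<forall>x y. famE i n x y \<longrightarrow> (x \<in> ?Q \<longleftrightarrow> y \<notin> ?Q)" using fam_odd by blast
  have c1: "card (set d \<inter> ?Q) \<le> card (set d - ?Q)" using card_cross[OF cy cr1] .
  have cr2: "\<forall>x y. famE i n x y \<longrightarrow> (x \<in> - ?Q \<longleftrightarrow> y \<notin> - ?Q)"
  proof (intro allI impI)
    fix x y assume "famE i n x y"
    then have "x \<in> ?Q \<longleftrightarrow> y \<notin> ?Q" by (rule fam_odd)
    then show "x \<in> - ?Q \<longleftrightarrow> y \<notin> - ?Q" by simp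
  qed
  have c2: "card (set d \<inter> - ?Q) \<le> card (set d - - ?Q)" using card_cross[OF cy cr2] .
  have "set d \<inter> - ?Q = set d - ?Q" "set d - - ?Q = set d \<inter> ?Q" by blast+
  then have eq: "card (set d \<inter> ?Q) = card (set d - ?Q)" using c1 c2 by simp
  have dd: "distinct d" using cy unfolding is_cycle_def by auto
  have ld: "length d = card (set d \<inter> ?Q) + card (set d - ?Q)"
    using card_Int_Diff[of "set d" ?Q] distinct_card[OF dd] by simp
  have c4: "card (set d \<inter> ?Q) \<le> 4"
  proof -
    have "card (set d \<inter> ?Q) \<le> card ?Q" by (rule card_mono) auto
    then show ?thesis by simp
  qed
  have "length d = 8 \<longrightarrow> set d = {1,2,3,4,5,6,7,8}"
  proof
    assume l8: "length d = 8"
    then have "card (set d \<inter> ?Q) = card ?Q" using ld eq by simp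
    then have Q: "set d \<inter> ?Q = ?Q" by (intro card_subset_eq) auto
    have "3 \<in> set d" "7 \<in> set d" using Q by auto
    obtain a b where ab: "a \<noteq> b" "a \<in> set d" "b \<in> set d" "famE i n 3 a" "famE i n 3 b"
      using nbrs_in_cycle[OF cy \<open>3 \<in> set d\<close>] fam_sym by blast
    obtain a' b' where ab': "a' \<noteq> b'" "a' \<in> set d" "b' \<in> set d" "famE i n 7 a'" "famE i n 7 b'"
      using nbrs_in_cycle[OF cy \<open>7 \<in> set d\<close>] fam_sym by blast
    have "{2,4} \<subseteq> set d" using ab fam_3[of i n a] fam_3[of i n b] by auto
    moreover have "{6,8} \<subseteq> set d" using ab' fam_7[of i n a'] fam_7[of i n b'] by auto
    ultimately have s: "{2,4,6,8} \<subseteq> set d - ?Q" by auto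
    have "card (set d - ?Q) = card {2,4,6,8::nat}" using ld eq l8 by simp
    then have "set d - ?Q = {2,4,6,8}" using s by (intro card_subset_eq[symmetric]) auto
    then show "set d = {1,2,3,4,5,6,7,8}" using Q by auto
  qed
  then show ?thesis using ld eq c4 by simp
qed

lemma fam_cc:
  assumes n: "9 \<le> n"
  shows "cc (famV n) (famE i n) = 8"
proof -
  let ?c = "[1,2,3,4,5,6,7,8::nat]"
  have cyc: "is_cycle (famV n) (famE i n) ?c"
    unfolding is_cycle_alt famV_def using n by (simp add: famE_iff fbase_def)
  have cb: "cummerbund (famV n) (famE i n) ?c"
    unfolding cummerbund_def
  proof (intro conjI allI impI)
    fix d assume "is_cycle (famV n) (famE i n) d"
    then have "length d \<le> 8" using fam_cycle_bound by blast
    then show "length d \<le> length ?c" by simp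
  qed (rule cyc)
  have "cset (famV n) (famE i n) = {1,2,3,4,5,6,7,8}"
  proof
    show "cset (famV n) (famE i n) \<subseteq> {1,2,3,4,5,6,7,8}"
    proof
      fix v assume "v \<in> cset (famV n) (famE i n)"
      then obtain d where d: "cummerbund (famV n) (famE i n) d" "v \<in> set d" unfolding cset_def by blast
      have d1: "is_cycle (famV n) (famE i n) d" "length ?c \<le> length d"
        using d(1) cyc unfolding cummerbund_def by auto
      have "length d \<le> 8" using fam_cycle_bound[OF d1(1)] by simp
      then have "length d = 8" using d1(2) by simp
      then show "v \<in> {1,2,3,4,5,6,7,8}" using fam_cycle_bound d unfolding cummerbund_def by blast
    qed
    show "{1,2,3,4,5,6,7,8} \<subseteq> cset (famV n) (famE i n)"
      using cummerbund_sub_cset[OF cb] by simp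
  qed
  then show ?thesis unfolding cc_cset by simp
qed


lemma mod8: assumes "(i::nat) < 8" "j < 8" "(i + 8 - j) mod 8 = 4" shows "j = (i + 4) mod 8"
  using less8_cases[OF assms(1)] less8_cases[OF assms(2)] assms(3) by (elim disjE) simp_all

context G2 begin

lemma part_A:
  assumes n: "card V = n" "n \<ge> 9"
  shows "cc V E \<ge> 8 \<and> (cc V E = 8 \<longrightarrow> (\<exists>c. cummerbund V E c \<and> length c = 8 \<and> cset V E = set c))"
proof -
  obtain c0 where "is_cycle V E c0" using exists_cycle[OF sg tc] by blast
  then obtain c where cb: "cummerbund V E c" using exists_cummerbund[OF sg] by blast
  have cy: "is_cycle V E c" using cb unfolding cummerbund_def by blast
  have lc: "length c = card (set c)" using cy distinct_card unfolding is_cycle_def by fastforce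
  have sub: "set c \<subseteq> cset V E" using cummerbund_sub_cset[OF cb] .
  have cge: "card (set c) \<le> cc V E" unfolding cc_cset using card_mono[OF cset_fin sub] .
  show ?thesis
  proof (cases "length c < 8")
    case True
    then have "cset V E = V" using small_all[OF cb] by blast
    then have "cc V E = n" using n unfolding cc_cset by simp
    then show ?thesis using n by simp
  next
    case False
    then have ge: "cc V E \<ge> 8" using cge lc by simp
    moreover have "cc V E = 8 \<longrightarrow> (\<exists>c. cummerbund V E c \<and> length c = 8 \<and> cset V E = set c)"
    proof
      assume c8: "cc V E = 8"
      then have l8: "length c = 8" using cge lc False by simp
      have "card (set c) = card (cset V E)" using c8 l8 lc unfolding cc_cset by simp
      then have "set c = cset V E" using card_subset_eq[OF cset_fin sub] by simp
      then show "\<exists>c. cummerbund V E c \<and> length c = 8 \<and> cset V E = set c" using cb l8 by metis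
    qed
    ultimately show ?thesis by blast
  qed
qed

end

locale G8 = G2 +
  fixes c
  assumes cb: "cummerbund V E c" and l8: "length c = 8" and cs: "cset V E = set c"
begin

lemma cy: "is_cycle V E c" using cb unfolding cummerbund_def by blast
lemma dc: "distinct c" using cy unfolding is_cycle_def by blast
lemma cV: "set c \<subseteq> V" using cy unfolding is_cycle_def by blast

lemma longest: "is_cycle V E D \<Longrightarrow> length D \<le> 8"
  using cb l8 unfolding cummerbund_def by metis

lemma no8: assumes "is_cycle V E D" "length D = 8" shows "set D \<subseteq> set c"
proof -
  have "cummerbund V E D" using assms longest unfolding cummerbund_def by simp
  then show ?thesis using cummerbund_sub_cset cs by blast
qed

lemma ear8:
  assumes ij: "i < 8" "j < 8" "i \<noteq> j"
    and R: "successively E R" "distinct R" "set R \<subseteq> V" "hd R = c ! i" "last R = c ! j"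
      "\<forall>v\<in>set R. v \<in> set c \<longrightarrow> v = c ! i \<or> v = c ! j" "length R \<ge> 3"
    and z: "z \<in> set R" "z \<notin> set c"
  shows "length R = 3 \<and> (i + 8 - j) mod 8 = 4"
proof -
  have ij': "i < length c" "j < length c" using ij l8 by auto
  have z': "z \<notin> cset V E" using z cs by simp
  have b1: "length R - 1 + (i + 8 - j) mod 8 + 2 \<le> 8" using ear_bound(1)[OF cb ij' ij(3) R z(1) z'] l8 by simp
  have b2: "length R - 1 + (j + 8 - i) mod 8 + 2 \<le> 8" using ear_bound(2)[OF cb ij' ij(3) R z(1) z'] l8 by simp
  have "(i + 8 - j) mod 8 + (j + 8 - i) mod 8 = 8" using dsum[OF ij] .
  then show ?thesis using b1 b2 R(7) by linarith
qed

lemma two_nbrs: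
  assumes z: "z \<in> V" "z \<notin> set c" and ki: "k < 8" "i < 8" "k \<noteq> i" and e: "E z (c ! k)" "E z (c ! i)"
  shows "i = (k + 4) mod 8"
proof -
  let ?R = "[c ! k, z, c ! i]"
  have cki: "c ! k \<noteq> c ! i" using dc ki l8 nth_eq_iff_index_eq by fastforce
  have inc: "c ! k \<in> set c" "c ! i \<in> set c" using ki l8 by auto
  have "successively E ?R" using e sym by simp
  moreover have "distinct ?R" using cki z inc by auto
  moreover have "set ?R \<subseteq> V" using z inc cV by auto
  moreover have "\<forall>v\<in>set ?R. v \<in> set c \<longrightarrow> v = c ! k \<or> v = c ! i" using z by auto
  ultimately have "length ?R = 3 \<and> (k + 8 - i) mod 8 = 4"
    using ear8[OF ki, of ?R z] z by simp
  then show ?thesis using mod8 ki by blast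
qed

lemma adj_pair:
  assumes z: "z \<in> V" "z \<notin> set c" and i: "i < 8" and e: "E (c ! i) z"
  shows "E z (c ! ((i + 4) mod 8))"
proof -
  obtain j R where jR: "j < length c" "j \<noteq> i" "successively E R" "distinct R" "set R \<subseteq> V" "hd R = c ! i"
     "last R = c ! j" "\<forall>v\<in>set R. v \<in> set c \<longrightarrow> v = c ! i \<or> v = c ! j" "length R \<ge> 3" "z \<in> set R"
     "tl R = z # tl (tl R)"
    using ear_from_adj[OF cy _ z e] i l8 by auto
  have j8: "j < 8" using jR l8 by simp
  have r: "length R = 3 \<and> (i + 8 - j) mod 8 = 4" using ear8[OF i j8 jR(2)[symmetric] jR(3-9) jR(10) z(2)] .
  have "R = [c ! i, z, c ! j]"
  proof -
    have "R = hd R # tl R" using jR(9) by (cases R) auto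
    then have "R = c ! i # z # tl (tl R)" using jR(6,11) by simp
    moreover then have "tl (tl R) = [last R]" using r by (cases "tl (tl R)") auto
    ultimately show ?thesis using jR(7) by simp
  qed
  then have "E z (c ! j)" using jR(3) by simp
  moreover have "j = (i + 4) mod 8" using mod8 i j8 r by blast
  ultimately show ?thesis by simp
qed

lemma no_out:
  assumes z: "z \<in> V" "z \<notin> set c" and i: "i < 8" and e: "E z (c ! i)" and y: "y \<notin> set c"
  shows "\<not> E z y"
proof
  assume zy: "E z y"
  let ?i4 = "(i + 4) mod 8"
  have e4: "E z (c ! ?i4)" using adj_pair[OF z i sym[OF e]] .
  have i4: "?i4 < 8" "?i4 \<noteq> i" using i by (auto simp: mod_if)
  have yV: "y \<in> V" using zy inV2 by blast
  have yz: "y \<in> V - {z}" using zy irr yV by auto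
  have c0: "c ! 0 \<in> set c" "c ! 0 \<in> V - {z}" using l8 cV z by auto
  obtain p where p: "successively E p" "distinct p" "p \<noteq> []" "hd p = y" "last p \<in> set c"
     "set p \<subseteq> V - {z}" "\<forall>v\<in>set (butlast p). v \<notin> set c"
    using path_to_set[OF cut[OF z(1)] yz c0] by blast
  obtain m where m: "m < 8" "last p = c ! m" using p(5) l8 by (metis in_set_conv_nth)
  have "\<exists>i'. i' < 8 \<and> i' \<noteq> m \<and> E z (c ! i')"
  proof (cases "i = m")
    case True then show ?thesis using i4 e4 by blast
  next
    case False then show ?thesis using i e by blast
  qed
  then obtain i' where i': "i' < 8" "i' \<noteq> m" "E z (c ! i')" by blast
  have pc: "\<forall>v\<in>set p. v \<in> set c \<longrightarrow> v = c ! m"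
  proof
    fix v assume v: "v \<in> set p"
    have "v \<in> set (butlast p) \<or> v = last p" using v p(3)
      by (metis append_butlast_last_id rotate1.simps(2) set_ConsD set_rotate1 in_set_butlast_appendI)
    then show "v \<in> set c \<longrightarrow> v = c ! m" using p(7) m by auto
  qed
  have cim: "c ! i' \<noteq> c ! m" using dc i' m l8 nth_eq_iff_index_eq by fastforce
  have ci'p: "c ! i' \<notin> set p" using pc cim i' l8 by auto
  have ci'V: "c ! i' \<in> set c" "c ! i' \<in> V" using i' l8 cV by auto
  have lp: "length p \<ge> 2"
  proof (rule ccontr)
    assume "\<not> ?thesis"
    then have "p = [hd p]" using p(3) by (cases p) (auto simp: Suc_le_eq)
    then show False using p y by (metis last_ConsL)
  qed
  let ?R = "c ! i' # z # p"
  have "successively E ?R" using p zy i' sym by (auto simp: successively_Cons)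
  moreover have "distinct ?R" using p ci'p z ci'V by auto
  moreover have "set ?R \<subseteq> V" using p z ci'V by auto
  moreover have "\<forall>v\<in>set ?R. v \<in> set c \<longrightarrow> v = c ! i' \<or> v = c ! m" using pc z by auto
  moreover have "last ?R = c ! m" using p(3) m by simp
  ultimately have "length ?R = 3 \<and> (i' + 8 - m) mod 8 = 4"
    using ear8[OF i'(1) m(1) i'(2), of ?R z] z lp by simp
  then show False using lp by simp
qed

lemma adj_c:
  assumes z: "z \<in> V" "z \<notin> set c"
  shows "\<exists>i<8. E z (c ! i)"
proof -
  have c0: "c ! 0 \<in> set c" "c ! 0 \<in> V" using l8 cV by auto
  obtain p where p: "successively E p" "distinct p" "p \<noteq> []" "hd p = z" "last p \<in> set c"
     "set p \<subseteq> V" "\<forall>v\<in>set (butlast p). v \<notin> set c"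
    using path_to_set[OF con z(1) c0] by blast
  obtain m where m: "m < 8" "last p = c ! m" using p(5) l8 by (metis in_set_conv_nth)
  have rp: "successively (\<lambda>x y. E y x) (rev p)" using p(1) by simp
  have lp: "length p \<ge> 2"
  proof (rule ccontr)
    assume "\<not> ?thesis"
    then have "p = [hd p]" using p(3) by (cases p) (auto simp: Suc_le_eq)
    then show False using p z by (metis last_ConsL)
  qed
  obtain x1 t where rt: "rev p = last p # x1 # t"
  proof -
    have "rev p = hd (rev p) # tl (rev p)" using p(3) by simp
    moreover have "tl (rev p) \<noteq> []" using lp by (cases "rev p") auto
    ultimately show ?thesis using that p(3) by (metis hd_rev list.collapse)
  qed
  have bl: "butlast p = rev (x1 # t)" using rt by (metis butlast_rev list.sel(3) rev_rev_ident)
  have x1c: "x1 \<notin> set c" "x1 \<in> V" using bl p(6,7) by (auto simp: in_set_butlastD)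
  have ex1: "E x1 (c ! m)" using rp rt m by simp
  show ?thesis
  proof (cases t)
    case Nil
    then have "p = [x1, last p]" using rt by (metis rev_rev_ident rev.simps append.simps)
    then have "x1 = z" using p(4) by (metis list.sel(1))
    then show ?thesis using ex1 m by blast
  next
    case (Cons x2 t')
    then have "E x2 x1" using rp rt by simp
    moreover have "x2 \<notin> set c" using bl Cons p(7) by auto
    ultimately show ?thesis using no_out[OF x1c(2) x1c(1) m(1) ex1] sym by blast
  qed
qed

lemma struct8:
  assumes z: "z \<in> V" "z \<notin> set c"
  shows "\<exists>i<8. E z (c ! i) \<and> E z (c ! ((i + 4) mod 8)) \<and> (\<forall>v. E z v \<longrightarrow> v = c ! i \<or> v = c ! ((i + 4) mod 8))"
proof -
  obtain i where i: "i < 8" "E z (c ! i)" using adj_c[OF z] by blast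
  have e4: "E z (c ! ((i + 4) mod 8))" using adj_pair[OF z i(1) sym[OF i(2)]] .
  have "\<forall>v. E z v \<longrightarrow> v = c ! i \<or> v = c ! ((i + 4) mod 8)"
  proof (intro allI impI)
    fix v assume ev: "E z v"
    have "v \<in> set c" using no_out[OF z i] ev by blast
    then obtain k where k: "k < 8" "v = c ! k" using l8 by (metis in_set_conv_nth)
    show "v = c ! i \<or> v = c ! ((i + 4) mod 8)"
    proof (cases "k = i")
      case False
      then have "k = (i + 4) mod 8" using two_nbrs[OF z i(1) k(1) False[symmetric] i(2)] ev k by simp
      then show ?thesis using k by simp
    qed (use k in simp)
  qed
  then show ?thesis using i e4 by blast
qed

end


lemma all8: "(\<forall>p::nat. p < 8 \<longrightarrow> P p) \<longleftrightarrow> P 0 \<and> P 1 \<and> P 2 \<and> P 3 \<and> P 4 \<and> P 5 \<and> P 6 \<and> P 7"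
proof
  assume "P 0 \<and> P 1 \<and> P 2 \<and> P 3 \<and> P 4 \<and> P 5 \<and> P 6 \<and> P 7"
  then show "\<forall>p::nat. p < 8 \<longrightarrow> P p" using less8_cases by metis
qed simp

lemma iso_canon:
  assumes fin: "finite V" and n: "card V = n" "9 \<le> n"
    and c: "length c = 8" "distinct c" "set c \<subseteq> V"
    and F1: "\<forall>p<8. \<forall>q<8. E (c ! p) (c ! q) \<longleftrightarrow> famE i n (p + 1) (q + 1)"
    and F2: "\<forall>z\<in>V - set c. \<forall>v. E z v \<longleftrightarrow> v = c ! 0 \<or> v = c ! 4"
    and F2': "\<forall>z\<in>V - set c. \<forall>v. E v z \<longleftrightarrow> v = c ! 0 \<or> v = c ! 4"
  shows "graph_iso V E (famV n) (famE i n)"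
proof -
  define X where "X = V - set c"
  have cs: "card (set c) = 8" using c distinct_card by metis
  have cX: "card X = n - 8" using card_Diff_subset[OF finite_subset[OF c(3) fin] c(3)] n cs X_def by simp
  have finX: "finite X" using fin X_def by simp
  have "card {9..n} = n - 8" by simp
  then obtain g where g: "bij_betw g {9..n} X" using finite_same_card_bij[of "{9..n}" X] finX cX by auto
  define F where "F k = (if k \<le> 8 then c ! (k - 1) else g k)" for k
  have b1: "bij_betw (\<lambda>k. c ! (k - 1)) {1..8} (set c)"
  proof (rule bij_betw_imageI)
    show "inj_on (\<lambda>k. c ! (k - 1)) {1..8}"
    proof
      fix a b assume ab: "a \<in> {1..8::nat}" "b \<in> {1..8::nat}" "c ! (a - 1) = c ! (b - 1)"
      then have "a - 1 = b - 1" using c nth_eq_iff_index_eq[of c "a - 1" "b - 1"] by auto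
      then show "a = b" using ab by auto
    qed
    show "(\<lambda>k. c ! (k - 1)) ` {1..8} = set c"
    proof
      show "(\<lambda>k. c ! (k - 1)) ` {1..8} \<subseteq> set c" using c by auto
      show "set c \<subseteq> (\<lambda>k. c ! (k - 1)) ` {1..8}"
      proof
        fix x assume "x \<in> set c"
        then obtain k where k: "k < 8" "c ! k = x" using c by (metis in_set_conv_nth)
        then have "x = c ! (Suc k - 1)" "Suc k \<in> {1..8}" by auto
        then show "x \<in> (\<lambda>k. c ! (k - 1)) ` {1..8}" by blast
      qed
    qed
  qed
  have b1': "bij_betw F {1..8} (set c)" using b1 by (rule bij_betw_cong[THEN iffD1, rotated]) (simp add: F_def)
  have b2': "bij_betw F {9..n} X" using g by (rule bij_betw_cong[THEN iffD1, rotated]) (simp add: F_def)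
  have un: "{1..8} \<union> {9..n} = {1..n}" using n by auto
  have unV: "set c \<union> X = V" using c X_def by auto
  have bF: "bij_betw F {1..n} V" using bij_betw_combine[OF b1' b2'] X_def un unV by auto
  have gX: "k \<in> {9..n} \<Longrightarrow> g k \<in> X" for k using g bij_betwE by blast
  have adj: "\<forall>a\<in>{1..n}. \<forall>b\<in>{1..n}. famE i n a b \<longleftrightarrow> E (F a) (F b)"
  proof (intro ballI)
    fix a b assume ab: "a \<in> {1..n}" "b \<in> {1..n}"
    show "famE i n a b \<longleftrightarrow> E (F a) (F b)"
    proof (cases "a \<le> 8")
      case a8: True
      show ?thesis
      proof (cases "b \<le> 8")
        case True
        then have "E (c ! (a - 1)) (c ! (b - 1)) \<longleftrightarrow> famE i n (a - 1 + 1) (b - 1 + 1)"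
          using F1 a8 ab by auto
        then show ?thesis using a8 True ab by (simp add: F_def)
      next
        case False
        then have gb: "g b \<in> X" using gX ab by auto
        have "E (c ! (a - 1)) (g b) \<longleftrightarrow> c ! (a - 1) = c ! 0 \<or> c ! (a - 1) = c ! 4"
          using F2' gb X_def by blast
        also have "\<dots> \<longleftrightarrow> a - 1 = 0 \<or> a - 1 = 4"
        proof -
          have l: "a - 1 < length c" "0 < length c" "4 < length c" using a8 c by auto
          show ?thesis using nth_eq_iff_index_eq[OF c(2) l(1) l(2)] nth_eq_iff_index_eq[OF c(2) l(1) l(3)] by simp
        qed
        also have "\<dots> \<longleftrightarrow> a = 1 \<or> a = 5" using ab by auto
        also have "\<dots> \<longleftrightarrow> famE i n a b" using fam_ext(1)[of a b n i] a8 ab False by auto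
        finally show ?thesis using a8 False by (simp add: F_def)
      qed
    next
      case a8: False
      then have ga: "g a \<in> X" using gX ab by auto
      show ?thesis
      proof (cases "b \<le> 8")
        case True
        have "E (g a) (c ! (b - 1)) \<longleftrightarrow> c ! (b - 1) = c ! 0 \<or> c ! (b - 1) = c ! 4"
          using F2 ga X_def by blast
        also have "\<dots> \<longleftrightarrow> b - 1 = 0 \<or> b - 1 = 4"
        proof -
          have l: "b - 1 < length c" "0 < length c" "4 < length c" using True c by auto
          show ?thesis using nth_eq_iff_index_eq[OF c(2) l(1) l(2)] nth_eq_iff_index_eq[OF c(2) l(1) l(3)] by simp
        qed
        also have "\<dots> \<longleftrightarrow> b = 1 \<or> b = 5" using ab by auto
        also have "\<dots> \<longleftrightarrow> famE i n a b" using fam_ext(2)[of b a n i] a8 ab True by auto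
        finally show ?thesis using a8 True by (simp add: F_def)
      next
        case False
        then have gb: "g b \<in> X" using gX ab by auto
        have "\<not> E (g a) (g b)" using F2 ga gb X_def c by auto
        moreover have "\<not> famE i n a b" using fam_ext2 a8 False by simp
        ultimately show ?thesis using a8 False by (simp add: F_def)
      qed
    qed
  qed
  have "bij_betw (inv_into {1..n} F) V {1..n} \<and>
        (\<forall>x\<in>V. \<forall>y\<in>V. E x y \<longleftrightarrow> famE i n (inv_into {1..n} F x) (inv_into {1..n} F y))"
    using iso_inv[OF bF adj] .
  then show ?thesis unfolding graph_iso_def famV_def by blast
qed


locale G8x = G8 +
  fixes x0 a0 a1 a2 a3 a4 a5 a6 a7
  assumes ceq: "c = [a0,a1,a2,a3,a4,a5,a6,a7]"
    and x0: "x0 \<in> V" "x0 \<notin> set c" "E x0 a0" "E x0 a4"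
begin

lemma dist: "distinct [x0,a0,a1,a2,a3,a4,a5,a6,a7]" using dc ceq x0 by simp

lemma aV: "a0 \<in> V" "a1 \<in> V" "a2 \<in> V" "a3 \<in> V" "a4 \<in> V" "a5 \<in> V" "a6 \<in> V" "a7 \<in> V"
  using cV ceq by auto

lemma cedges: "E a0 a1" "E a1 a2" "E a2 a3" "E a3 a4" "E a4 a5" "E a5 a6" "E a6 a7" "E a7 a0"
  using cy ceq unfolding is_cycle_alt by auto

lemma cedges': "E a1 a0" "E a2 a1" "E a3 a2" "E a4 a3" "E a5 a4" "E a6 a5" "E a7 a6" "E a0 a7"
  using cedges sym by auto

lemma x0e: "E a0 x0" "E a4 x0" using x0 sym by auto

lemma nonedges:
  "\<not> E a0 a2" "\<not> E a0 a4" "\<not> E a0 a6" "\<not> E a1 a3" "\<not> E a1 a5" "\<not> E a1 a7"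
  "\<not> E a2 a4" "\<not> E a2 a6" "\<not> E a3 a5" "\<not> E a3 a7" "\<not> E a4 a6" "\<not> E a5 a7"
proof -
  obtain A where A: "\<forall>x y. E x y \<longrightarrow> (x \<in> A \<longleftrightarrow> y \<notin> A)" using bp unfolding bipartite_def by blast
  have col: "a0 \<in> A \<longleftrightarrow> a1 \<notin> A" "a1 \<in> A \<longleftrightarrow> a2 \<notin> A" "a2 \<in> A \<longleftrightarrow> a3 \<notin> A" "a3 \<in> A \<longleftrightarrow> a4 \<notin> A"
     "a4 \<in> A \<longleftrightarrow> a5 \<notin> A" "a5 \<in> A \<longleftrightarrow> a6 \<notin> A" "a6 \<in> A \<longleftrightarrow> a7 \<notin> A"
    using A cedges by blast+
  show "\<not> E a0 a2" "\<not> E a0 a4" "\<not> E a0 a6" "\<not> E a1 a3" "\<not> E a1 a5" "\<not> E a1 a7"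
    "\<not> E a2 a4" "\<not> E a2 a6" "\<not> E a3 a5" "\<not> E a3 a7" "\<not> E a4 a6" "\<not> E a5 a7"
    using A col by blast+
qed

lemma c8: "is_cycle V E D \<Longrightarrow> length D = 8 \<Longrightarrow> x0 \<in> set D \<Longrightarrow> False"
  using no8 x0 by blast

lemma c9: "is_cycle V E D \<Longrightarrow> length D \<ge> 9 \<Longrightarrow> False"
  using longest by fastforce

lemmas basic = dist aV cedges cedges' x0 x0e

lemma forb: "\<not> E a2 a5" "\<not> E a3 a6" "\<not> E a1 a6" "\<not> E a2 a7"
proof -
  show "\<not> E a2 a5"
  proof
    assume e: "E a2 a5"
    have "is_cycle V E [x0, a0, a7, a6, a5, a2, a3, a4]"
      unfolding is_cycle_alt using basic e sym[OF e] by auto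
    then show False by (rule c8) simp_all
  qed
  show "\<not> E a3 a6"
  proof
    assume e: "E a3 a6"
    have "is_cycle V E [x0, a0, a1, a2, a3, a6, a5, a4]"
      unfolding is_cycle_alt using basic e sym[OF e] by auto
    then show False by (rule c8) simp_all
  qed
  show "\<not> E a1 a6"
  proof
    assume e: "E a1 a6"
    have "is_cycle V E [x0, a0, a7, a6, a1, a2, a3, a4]"
      unfolding is_cycle_alt using basic e sym[OF e] by auto
    then show False by (rule c8) simp_all
  qed
  show "\<not> E a2 a7"
  proof
    assume e: "E a2 a7"
    have "is_cycle V E [x0, a0, a1, a2, a7, a6, a5, a4]"
      unfolding is_cycle_alt using basic e sym[OF e] by auto
    then show False by (rule c8) simp_all
  qed
qed

lemma extra:
  assumes y: "y \<in> V" "y \<notin> set c"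
  shows "E y a0 \<and> E y a4 \<and> (\<forall>v. E y v \<longrightarrow> v = a0 \<or> v = a4)"
proof -
  obtain i where i: "i < 8" "E y (c ! i)" "E y (c ! ((i + 4) mod 8))"
    "\<forall>v. E y v \<longrightarrow> v = c ! i \<or> v = c ! ((i + 4) mod 8)" using struct8[OF y] by blast
  have ya: "y \<noteq> a0" "y \<noteq> a1" "y \<noteq> a2" "y \<noteq> a3" "y \<noteq> a4" "y \<noteq> a5" "y \<noteq> a6" "y \<noteq> a7"
    using y ceq by auto
  have dd: "distinct [x0,a0,a1,a2,a3,a4,a5,a6,a7]" using dist .
  have p15: False if "E y a1" "E y a5" "y \<noteq> x0"
  proof -
    have "is_cycle V E [x0, a0, a7, a6, a5, y, a1, a2, a3, a4]"
      unfolding is_cycle_alt using basic that ya y sym[OF that(2)] by auto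
    then show False by (rule c9) simp
  qed
  have p26: False if "E y a2" "E y a6" "y \<noteq> x0"
  proof -
    have "is_cycle V E [x0, a0, a1, a2, y, a6, a5, a4]"
      unfolding is_cycle_alt using basic that ya y sym[OF that(1)] by auto
    then show False by (rule c8) simp_all
  qed
  have p37: False if "E y a3" "E y a7" "y \<noteq> x0"
  proof -
    have "is_cycle V E [x0, a0, a1, a2, a3, y, a7, a6, a5, a4]"
      unfolding is_cycle_alt using basic that ya y sym[OF that(1)] by auto
    then show False by (rule c9) simp
  qed
  have nx: "y \<noteq> x0" if "i \<noteq> 0" "i \<noteq> 4"
  proof
    assume "y = x0"
    then have "a0 = c ! i \<or> a0 = c ! ((i + 4) mod 8)" using i(4) x0 by blast
    then show False using that less8_cases[OF i(1)] dd ceq by auto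
  qed
  show ?thesis
    using less8_cases[OF i(1)] i ceq nx p15 p26 p37 by (elim disjE) auto
qed

lemma F2: "\<forall>z\<in>V - set c. \<forall>v. E z v \<longleftrightarrow> v = c ! 0 \<or> v = c ! 4"
  using extra ceq by auto

lemma F2': "\<forall>z\<in>V - set c. \<forall>v. E v z \<longleftrightarrow> v = c ! 0 \<or> v = c ! 4"
  using F2 sym by blast

lemma F1: "\<forall>p<8. \<forall>q<8. E ([a0,a1,a2,a3,a4,a5,a6,a7] ! p) ([a0,a1,a2,a3,a4,a5,a6,a7] ! q)
   \<longleftrightarrow> adj8 (E a0 a3) (E a0 a5) (E a1 a4) (E a4 a7) p q"
proof -
  have s: "E a3 a0 \<longleftrightarrow> E a0 a3" "E a5 a0 \<longleftrightarrow> E a0 a5" "E a4 a1 \<longleftrightarrow> E a1 a4" "E a7 a4 \<longleftrightarrow> E a4 a7"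
    using sym by blast+
  have ne: "\<not> E a2 a0" "\<not> E a4 a0" "\<not> E a6 a0" "\<not> E a3 a1" "\<not> E a5 a1" "\<not> E a7 a1"
    "\<not> E a4 a2" "\<not> E a6 a2" "\<not> E a5 a3" "\<not> E a7 a3" "\<not> E a6 a4" "\<not> E a7 a5"
    using nonedges sym by blast+
  have fb: "\<not> E a5 a2" "\<not> E a6 a3" "\<not> E a6 a1" "\<not> E a7 a2" using forb sym by blast+
  have ir: "\<not> E a0 a0" "\<not> E a1 a1" "\<not> E a2 a2" "\<not> E a3 a3" "\<not> E a4 a4" "\<not> E a5 a5" "\<not> E a6 a6" "\<not> E a7 a7"
    using irr by auto
  show ?thesis unfolding all8 adj8_def
    using s ne fb ir nonedges forb cedges cedges' by simp
qed

end


lemma len8: assumes "length l = 8" shows "l = [l!0, l!1, l!2, l!3, l!4, l!5, l!6, l!7]"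
proof (rule nth_equalityI)
  show "length l = length [l!0, l!1, l!2, l!3, l!4, l!5, l!6, l!7]" using assms by simp
  fix k assume "k < length l"
  then have "k < 8" using assms by simp
  then have "k = 0 \<or> k = 1 \<or> k = 2 \<or> k = 3 \<or> k = 4 \<or> k = 5 \<or> k = 6 \<or> k = 7" by (rule less8_cases)
  then show "l ! k = [l!0, l!1, l!2, l!3, l!4, l!5, l!6, l!7] ! k"
    by (elim disjE) simp_all
qed

context G8x begin

lemma F1x: "(\<forall>p<8. \<forall>q<8. E ([a0,a1,a2,a3,a4,a5,a6,a7] ! p) ([a0,a1,a2,a3,a4,a5,a6,a7] ! q)
   \<longleftrightarrow> adj8 (E a0 a3) (E a0 a5) (E a1 a4) (E a4 a7) p q)" using F1 .

lemma canon:
  assumes n: "card V = n" "9 \<le> n" and i: "i \<in> {1..7}"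
    and l: "length l = 8" "distinct l" "set l = set c" "{l ! 0, l ! 4} = {a0, a4}"
    and H: "\<forall>p<8. \<forall>q<8. E (l ! p) (l ! q) \<longleftrightarrow> adj8 (f03 i) (f05 i) (f14 i) (f47 i) p q"
  shows "in_family_F V E n"
proof -
  have F1': "\<forall>p<8. \<forall>q<8. E (l ! p) (l ! q) \<longleftrightarrow> famE i n (p + 1) (q + 1)"
    using H fam_adj8 by simp
  have F2l: "\<forall>z\<in>V - set l. \<forall>v. E z v \<longleftrightarrow> v = l ! 0 \<or> v = l ! 4"
    using F2 l(3,4) ceq by (simp add: doubleton_eq_iff) blast
  have F2l': "\<forall>z\<in>V - set l. \<forall>v. E v z \<longleftrightarrow> v = l ! 0 \<or> v = l ! 4"
    using F2l sym by blast
  have "graph_iso V E (famV n) (famE i n)"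
    using iso_canon[OF fin n l(1,2) _ F1' F2l F2l'] l(3) cV by simp
  then show ?thesis unfolding in_family_F_def using i by blast
qed

lemma via_id:
  assumes n: "card V = n" "9 \<le> n" and i: "i \<in> {1..7}"
    and f: "E a0 a3 = f03 i" "E a0 a5 = f05 i" "E a1 a4 = f14 i" "E a4 a7 = f47 i"
  shows "in_family_F V E n"
proof (rule canon[OF n i, of "[a0,a1,a2,a3,a4,a5,a6,a7]"])
  show "\<forall>p<8. \<forall>q<8. E ([a0,a1,a2,a3,a4,a5,a6,a7] ! p) ([a0,a1,a2,a3,a4,a5,a6,a7] ! q)
     \<longleftrightarrow> adj8 (f03 i) (f05 i) (f14 i) (f47 i) p q" using F1x f by simp
qed (use dist ceq in auto)

lemma via_r:
  assumes n: "card V = n" "9 \<le> n" and i: "i \<in> {1..7}"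
    and f: "E a0 a5 = f03 i" "E a0 a3 = f05 i" "E a4 a7 = f14 i" "E a1 a4 = f47 i"
  shows "in_family_F V E n"
proof (rule canon[OF n i, of "[a0,a7,a6,a5,a4,a3,a2,a1]"])
  show "\<forall>p<8. \<forall>q<8. E ([a0,a7,a6,a5,a4,a3,a2,a1] ! p) ([a0,a7,a6,a5,a4,a3,a2,a1] ! q)
     \<longleftrightarrow> adj8 (f03 i) (f05 i) (f14 i) (f47 i) p q"
    using F1x f unfolding all8 adj8_def by simp
qed (use dist ceq in auto)

lemma via_t:
  assumes n: "card V = n" "9 \<le> n" and i: "i \<in> {1..7}"
    and f: "E a4 a7 = f03 i" "E a1 a4 = f05 i" "E a0 a5 = f14 i" "E a0 a3 = f47 i"
  shows "in_family_F V E n"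
proof (rule canon[OF n i, of "[a4,a5,a6,a7,a0,a1,a2,a3]"])
  show "\<forall>p<8. \<forall>q<8. E ([a4,a5,a6,a7,a0,a1,a2,a3] ! p) ([a4,a5,a6,a7,a0,a1,a2,a3] ! q)
     \<longleftrightarrow> adj8 (f03 i) (f05 i) (f14 i) (f47 i) p q"
    using F1x f unfolding all8 adj8_def by simp
qed (use dist ceq in auto)

lemma via_rt:
  assumes n: "card V = n" "9 \<le> n" and i: "i \<in> {1..7}"
    and f: "E a1 a4 = f03 i" "E a4 a7 = f05 i" "E a0 a3 = f14 i" "E a0 a5 = f47 i"
  shows "in_family_F V E n"
proof (rule canon[OF n i, of "[a4,a3,a2,a1,a0,a7,a6,a5]"])
  show "\<forall>p<8. \<forall>q<8. E ([a4,a3,a2,a1,a0,a7,a6,a5] ! p) ([a4,a3,a2,a1,a0,a7,a6,a5] ! q)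
     \<longleftrightarrow> adj8 (f03 i) (f05 i) (f14 i) (f47 i) p q"
    using F1x f unfolding all8 adj8_def by simp
qed (use dist ceq in auto)

lemma bool_cases:
  "\<exists>i\<in>{1,2,3,4,5,6,7::nat}.
     (bA = f03 i \<and> bB = f05 i \<and> bC = f14 i \<and> bD = f47 i) \<or>
     (bB = f03 i \<and> bA = f05 i \<and> bD = f14 i \<and> bC = f47 i) \<or>
     (bD = f03 i \<and> bC = f05 i \<and> bB = f14 i \<and> bA = f47 i) \<or>
     (bC = f03 i \<and> bD = f05 i \<and> bA = f14 i \<and> bB = f47 i)"
  by (cases bA; cases bB; cases bC; cases bD) (simp_all add: f03_def f05_def f14_def f47_def)

lemma family:
  assumes n: "card V = n" "9 \<le> n"
  shows "in_family_F V E n"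
proof -
  obtain i where i: "i \<in> {1,2,3,4,5,6,7::nat}" and
    h: "(E a0 a3 = f03 i \<and> E a0 a5 = f05 i \<and> E a1 a4 = f14 i \<and> E a4 a7 = f47 i) \<or>
     (E a0 a5 = f03 i \<and> E a0 a3 = f05 i \<and> E a4 a7 = f14 i \<and> E a1 a4 = f47 i) \<or>
     (E a4 a7 = f03 i \<and> E a1 a4 = f05 i \<and> E a0 a5 = f14 i \<and> E a0 a3 = f47 i) \<or>
     (E a1 a4 = f03 i \<and> E a4 a7 = f05 i \<and> E a0 a3 = f14 i \<and> E a0 a5 = f47 i)"
    using bool_cases[where bA="E a0 a3" and bB="E a0 a5" and bC="E a1 a4" and bD="E a4 a7"] by (elim bexE) blast
  have i': "i \<in> {1..7}" using i by auto
  from h show ?thesis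
  proof (elim disjE)
    assume "E a0 a3 = f03 i \<and> E a0 a5 = f05 i \<and> E a1 a4 = f14 i \<and> E a4 a7 = f47 i"
    then show ?thesis using via_id[OF n i'] by blast
  next
    assume "E a0 a5 = f03 i \<and> E a0 a3 = f05 i \<and> E a4 a7 = f14 i \<and> E a1 a4 = f47 i"
    then show ?thesis using via_r[OF n i'] by blast
  next
    assume "E a4 a7 = f03 i \<and> E a1 a4 = f05 i \<and> E a0 a5 = f14 i \<and> E a0 a3 = f47 i"
    then show ?thesis using via_t[OF n i'] by blast
  next
    assume "E a1 a4 = f03 i \<and> E a4 a7 = f05 i \<and> E a0 a3 = f14 i \<and> E a0 a5 = f47 i"
    then show ?thesis using via_rt[OF n i'] by blast
  qed
qed

end

theorem main_thm:
  fixes V :: "'a set" and E :: "'a \<Rightarrow> 'a \<Rightarrow> bool" and n :: nat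
  assumes "simple_graph V E" and "two_connected V E" and "bipartite V E"
    and "card V = n" and "n \<ge> 9"
  shows "cc V E \<ge> 8 \<and> (cc V E = 8 \<longleftrightarrow> in_family_F V E n)"
proof -
  interpret G2 V E using assms(1-3) by unfold_locales
  have A: "cc V E \<ge> 8 \<and> (cc V E = 8 \<longrightarrow> (\<exists>c. cummerbund V E c \<and> length c = 8 \<and> cset V E = set c))"
    using part_A[OF assms(4,5)] .
  have "cc V E = 8 \<longleftrightarrow> in_family_F V E n"
  proof
    assume "in_family_F V E n"
    then obtain i where "graph_iso V E (famV n) (famE i n)" unfolding in_family_F_def by blast
    then have "cc V E = cc (famV n) (famE i n)" by (rule iso_cc)
    then show "cc V E = 8" using fam_cc[OF assms(5)] by simp
  next
    assume "cc V E = 8"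
    then obtain c where c: "cummerbund V E c" "length c = 8" "cset V E = set c" using A by blast
    interpret G8 V E c using c by unfold_locales
    have "card (set c) = 8" using c(2) dc distinct_card by metis
    then have "\<not> V \<subseteq> set c" using assms(4,5) card_mono[OF finite_set, of V c] by auto
    then obtain x0 where x0: "x0 \<in> V" "x0 \<notin> set c" by blast
    obtain i where i: "i < 8" "E x0 (c ! i)" using adj_c[OF x0] by blast
    have e4: "E x0 (c ! ((i + 4) mod 8))" using adj_pair[OF x0 i(1) sym[OF i(2)]] .
    define c' where "c' = rotate i c"
    have cy': "is_cycle V E c'" using cycle_rotate[OF cy] c'_def by simp
    have l': "length c' = 8" using c'_def c(2) by simp
    have s': "set c' = set c" using c'_def by simp
    have cb': "cummerbund V E c'" using cy' cb l' c(2) unfolding cummerbund_def by simp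
    have n0: "c' ! 0 = c ! i" using nth_rotate[of 0 c i] c(2) i c'_def by simp
    have n4: "c' ! 4 = c ! ((i + 4) mod 8)" using nth_rotate[of 4 c i] c(2) c'_def by (simp add: add.commute)
    interpret G8 V E c' using cb' l' c(3) s' by unfold_locales simp_all
    have ceq: "c' = [c'!0, c'!1, c'!2, c'!3, c'!4, c'!5, c'!6, c'!7]" using len8[OF l'] .
    interpret G8x V E c' x0 "c'!0" "c'!1" "c'!2" "c'!3" "c'!4" "c'!5" "c'!6" "c'!7"
      using ceq x0 s' i(2) e4 n0 n4 by unfold_locales simp_all
    show "in_family_F V E n" using family[OF assms(4,5)] .
  qed
  then show ?thesis using A by blast
qed


theorem theorem14:
  fixes V :: "'a set" and E :: "'a \<Rightarrow> 'a \<Rightarrow> bool" and n :: nat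
  assumes "simple_graph V E" and "two_connected V E" and "bipartite V E"
    and "card V = n" and "n \<ge> 9"
  shows "cc V E \<ge> 8 \<and> (cc V E = 8 \<longleftrightarrow> in_family_F V E n)"
  using main_thm[OF assms] .

end
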